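(* Let $R$ be a $\sigma$-(sps) Armendariz ring, where $\sigma$ is an endomorphism of $R$. The following are equivalent: (1) $R$ is reversible; (2) $R$ is $\sigma$-reversible; (3) $R$ is right $\sigma$-reversible; (4) $R[[x;\sigma]]$ is reversible. Likewise, the following are equivalent: (1') $R$ is symmetric; (2') $R$ is $\sigma$-symmetric; (3') $R$ is right $\sigma$-symmetric; (4') $R[[x;\sigma]]$ is symmetric.
   Context: All rings are associative with identity; $\sigma$ denotes a nonzero, non-identity ring endomorphism of $R$. The skew power series ring $R[[x;\sigma]]$ consists of all formal series $\sum_{i=0}^\infty a_i x^i$ with $a_i\in R$, added termwise and multiplied using distributivity and the rule $xa=\sigma(a)x$ for $a\in R$. A ring $R$ is $\sigma$-(sps) Armendariz if whenever $p=\sum_{i=0}^\infty a_ix^i$ and $q=\sum_{j=0}^\infty b_jx^j$ in $R[[x;\sigma]]$ satisfy $pq=0$, then $a_ib_j=0$ for all $i,j$. A ring $S$ is reversible if $ab=0$ implies $ba=0$; symmetric if $abc=0$ implies $acb=0$. $R$ is right $\sigma$-reversible if $ab=0$ implies $b\sigma(a)=0$ for $a,b\in R$; left $\sigma$-reversible if $ab=0$ implies $\sigma(b)a=0$; $\sigma$-reversible if both. $R$ is right $\sigma$-symmetric if $abc=0$ implies $ac\sigma(b)=0$ for $a,b,c\in R$; left $\sigma$-symmetric if $abc=0$ implies $\sigma(b)ac=0$; $\sigma$-symmetric if both. *)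

theory Defs
  imports Main
begin

definition ring_endo :: "('a::ring_1 \<Rightarrow> 'a) \<Rightarrow> bool" where
  "ring_endo \<sigma> \<longleftrightarrow> (\<forall>a b. \<sigma> (a + b) = \<sigma> a + \<sigma> b) \<and>
                     (\<forall>a b. \<sigma> (a * b) = \<sigma> a * \<sigma> b) \<and> \<sigma> 1 = 1"

text \<open>Skew power series ring R[[x;sigma]]: a series sum a_i x^i is its coefficient
  sequence nat => R; addition is termwise, zero is the zero sequence, and
  multiplication follows from x a = sigma(a) x, i.e.
  (sum a_i x^i)(sum b_j x^j) = sum_n (sum_{i+j=n} a_i sigma^i(b_j)) x^n.\<close>
definition sps_zero :: "nat \<Rightarrow> 'a::ring_1" where
  "sps_zero = (\<lambda>_. 0)"

definition sps_mult :: "('a::ring_1 \<Rightarrow> 'a) \<Rightarrow> (nat \<Rightarrow> 'a) \<Rightarrow> (nat \<Rightarrow> 'a) \<Rightarrow> (nat \<Rightarrow> 'a)" where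
  "sps_mult \<sigma> p q = (\<lambda>n. \<Sum>i\<le>n. p i * (\<sigma> ^^ i) (q (n - i)))"

definition sps_armendariz :: "('a::ring_1 \<Rightarrow> 'a) \<Rightarrow> bool" where
  "sps_armendariz \<sigma> \<longleftrightarrow>
     (\<forall>p q. sps_mult \<sigma> p q = sps_zero \<longrightarrow> (\<forall>i j. p i * q j = 0))"

definition reversible :: "'a::ring_1 itself \<Rightarrow> bool" where
  "reversible _ \<longleftrightarrow> (\<forall>a b::'a. a * b = 0 \<longrightarrow> b * a = 0)"

definition symmetric_ring :: "'a::ring_1 itself \<Rightarrow> bool" where
  "symmetric_ring _ \<longleftrightarrow> (\<forall>a b c::'a. a * b * c = 0 \<longrightarrow> a * c * b = 0)"

definition right_sigma_reversible :: "('a::ring_1 \<Rightarrow> 'a) \<Rightarrow> bool" where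
  "right_sigma_reversible \<sigma> \<longleftrightarrow> (\<forall>a b. a * b = 0 \<longrightarrow> b * \<sigma> a = 0)"

definition left_sigma_reversible :: "('a::ring_1 \<Rightarrow> 'a) \<Rightarrow> bool" where
  "left_sigma_reversible \<sigma> \<longleftrightarrow> (\<forall>a b. a * b = 0 \<longrightarrow> \<sigma> b * a = 0)"

definition sigma_reversible :: "('a::ring_1 \<Rightarrow> 'a) \<Rightarrow> bool" where
  "sigma_reversible \<sigma> \<longleftrightarrow> right_sigma_reversible \<sigma> \<and> left_sigma_reversible \<sigma>"

definition right_sigma_symmetric :: "('a::ring_1 \<Rightarrow> 'a) \<Rightarrow> bool" where
  "right_sigma_symmetric \<sigma> \<longleftrightarrow> (\<forall>a b c. a * b * c = 0 \<longrightarrow> a * c * \<sigma> b = 0)"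

definition left_sigma_symmetric :: "('a::ring_1 \<Rightarrow> 'a) \<Rightarrow> bool" where
  "left_sigma_symmetric \<sigma> \<longleftrightarrow> (\<forall>a b c. a * b * c = 0 \<longrightarrow> \<sigma> b * a * c = 0)"

definition sigma_symmetric :: "('a::ring_1 \<Rightarrow> 'a) \<Rightarrow> bool" where
  "sigma_symmetric \<sigma> \<longleftrightarrow> right_sigma_symmetric \<sigma> \<and> left_sigma_symmetric \<sigma>"

definition sps_reversible :: "('a::ring_1 \<Rightarrow> 'a) \<Rightarrow> bool" where
  "sps_reversible \<sigma> \<longleftrightarrow>
     (\<forall>p q. sps_mult \<sigma> p q = sps_zero \<longrightarrow> sps_mult \<sigma> q p = sps_zero)"

definition sps_symmetric :: "('a::ring_1 \<Rightarrow> 'a) \<Rightarrow> bool" where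
  "sps_symmetric \<sigma> \<longleftrightarrow>
     (\<forall>p q r. sps_mult \<sigma> (sps_mult \<sigma> p q) r = sps_zero \<longrightarrow>
              sps_mult \<sigma> (sps_mult \<sigma> p r) q = sps_zero)"

end

theory Submission
  imports Defs
begin

lemma endo_neg:
  assumes "ring_endo \<sigma>" shows "\<sigma> (- x) = - \<sigma> x"
proof -
  have "\<sigma> (- x + x) = \<sigma> (- x) + \<sigma> x" using assms unfolding ring_endo_def by blast
  moreover have "\<sigma> 0 = 0"
  proof -
    have "\<sigma> (0 + 0) = \<sigma> 0 + \<sigma> 0" using assms unfolding ring_endo_def by blast
    thus ?thesis by simp
  qed
  ultimately show ?thesis by (simp add: eq_neg_iff_add_eq_0)
qed

lemma sum_first_two:
  fixes f :: "nat \<Rightarrow> 'a::comm_monoid_add"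
  assumes "\<And>i. i \<ge> 2 \<Longrightarrow> f i = 0"
  shows "(\<Sum>i\<le>Suc m. f i) = f 0 + f 1"
proof -
  have "(\<Sum>i\<le>Suc m. f i) = f 0 + (\<Sum>i\<le>m. f (Suc i))" by (rule sum.atMost_Suc_shift)
  also have "(\<Sum>i\<le>m. f (Suc i)) = f (Suc 0) + (\<Sum>i<m. f (Suc (Suc i)))" by (rule sum.atMost_shift)
  also have "(\<Sum>i<m. f (Suc (Suc i))) = 0" using assms by simp
  finally show ?thesis by simp
qed

lemma sum_first:
  fixes f :: "nat \<Rightarrow> 'a::comm_monoid_add"
  assumes "\<And>i. i \<ge> 1 \<Longrightarrow> f i = 0"
  shows "(\<Sum>i\<le>m. f i) = f 0"
proof -
  have "(\<Sum>i\<le>m. f i) = f 0 + (\<Sum>i<m. f (Suc i))" by (rule sum.atMost_shift)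
  also have "(\<Sum>i<m. f (Suc i)) = 0" using assms by simp
  finally show ?thesis by simp
qed

lemma endo_zero:
  assumes "ring_endo \<sigma>" shows "\<sigma> 0 = 0"
proof -
  have "\<sigma> (0 + 0) = \<sigma> 0 + \<sigma> 0" using assms unfolding ring_endo_def by blast
  thus ?thesis by simp
qed

lemma L1:
  fixes \<sigma> :: "'a::ring_1 \<Rightarrow> 'a"
  assumes e: "ring_endo \<sigma>" and arm: "sps_armendariz \<sigma>" and ab: "a * b = 0"
  shows "a * \<sigma> b = 0"
proof -
  define p :: "nat \<Rightarrow> 'a" where "p = (\<lambda>i. if i \<le> 1 then a else 0)"
  define q :: "nat \<Rightarrow> 'a" where "q = (\<lambda>n. ((\<lambda>x. - \<sigma> x) ^^ n) b)"
  have qS: "q (Suc n) = - \<sigma> (q n)" for n by (simp add: q_def)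
  have "sps_mult \<sigma> p q n = 0" for n
  proof (cases n)
    case 0 thus ?thesis by (simp add: sps_mult_def p_def q_def ab)
  next
    case (Suc m)
    have "sps_mult \<sigma> p q n = (\<Sum>i\<le>Suc m. p i * (\<sigma> ^^ i) (q (Suc m - i)))"
      by (simp add: sps_mult_def Suc)
    also have "\<dots> = p 0 * (\<sigma> ^^ 0) (q (Suc m - 0)) + p 1 * (\<sigma> ^^ 1) (q (Suc m - 1))"
      by (rule sum_first_two) (simp add: p_def)
    also have "\<dots> = 0" by (simp add: p_def qS)
    finally show ?thesis .
  qed
  hence "sps_mult \<sigma> p q = sps_zero" by (auto simp: sps_zero_def)
  with arm have "p 0 * q 1 = 0" unfolding sps_armendariz_def by blast
  thus ?thesis by (simp add: p_def q_def)
qed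

lemma L1pow:
  fixes \<sigma> :: "'a::ring_1 \<Rightarrow> 'a"
  assumes e: "ring_endo \<sigma>" and arm: "sps_armendariz \<sigma>" and ab: "a * b = 0"
  shows "a * (\<sigma> ^^ k) b = 0"
  by (induction k) (auto simp: ab intro: L1[OF e arm])

lemma L1conv:
  fixes \<sigma> :: "'a::ring_1 \<Rightarrow> 'a"
  assumes e: "ring_endo \<sigma>" and arm: "sps_armendariz \<sigma>" and ab: "a * \<sigma> b = 0"
  shows "a * b = 0"
proof -
  define p :: "nat \<Rightarrow> 'a" where "p = (\<lambda>i. if i = 1 then a else 0)"
  define q :: "nat \<Rightarrow> 'a" where "q = (\<lambda>n. if n = 0 then b else 0)"
  have "sps_mult \<sigma> p q n = 0" for n
  proof (cases n)
    case 0 thus ?thesis by (simp add: sps_mult_def p_def q_def)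
  next
    case (Suc m)
    have "sps_mult \<sigma> p q n = (\<Sum>i\<le>Suc m. p i * (\<sigma> ^^ i) (q (Suc m - i)))"
      by (simp add: sps_mult_def Suc)
    also have "\<dots> = p 0 * (\<sigma> ^^ 0) (q (Suc m - 0)) + p 1 * (\<sigma> ^^ 1) (q (Suc m - 1))"
      by (rule sum_first_two) (simp add: p_def)
    also have "\<dots> = 0" using ab by (cases m) (simp_all add: p_def q_def endo_zero[OF e])
    finally show ?thesis .
  qed
  hence "sps_mult \<sigma> p q = sps_zero" by (auto simp: sps_zero_def)
  with arm have "p 1 * q 0 = 0" unfolding sps_armendariz_def by blast
  thus ?thesis by (simp add: p_def q_def)
qed

definition cst :: "'a::ring_1 \<Rightarrow> nat \<Rightarrow> 'a" where
  "cst c = (\<lambda>n. if n = 0 then c else 0)"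

lemma mult_cst: "sps_mult \<sigma> (cst a) q = (\<lambda>n. a * q n)"
proof
  fix n
  show "sps_mult \<sigma> (cst a) q n = a * q n"
    unfolding sps_mult_def by (subst sum_first) (auto simp: cst_def)
qed

lemma cst_zero: "(cst c = sps_zero) = (c = 0)"
  by (auto simp: cst_def sps_zero_def fun_eq_iff)

lemma cst_mult: "sps_mult \<sigma> (cst a) (cst b) = cst (a * b)"
  unfolding mult_cst by (auto simp: cst_def)

theorem theorem2p7:
  fixes \<sigma> :: "'a::ring_1 \<Rightarrow> 'a"
  assumes "ring_endo \<sigma>"
    and "\<sigma> \<noteq> (\<lambda>_. 0)"
    and "\<sigma> \<noteq> id"
    and "sps_armendariz \<sigma>"
  shows "(reversible TYPE('a) \<longleftrightarrow> sigma_reversible \<sigma>) \<and>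
         (reversible TYPE('a) \<longleftrightarrow> right_sigma_reversible \<sigma>) \<and>
         (reversible TYPE('a) \<longleftrightarrow> sps_reversible \<sigma>) \<and>
         (symmetric_ring TYPE('a) \<longleftrightarrow> sigma_symmetric \<sigma>) \<and>
         (symmetric_ring TYPE('a) \<longleftrightarrow> right_sigma_symmetric \<sigma>) \<and>
         (symmetric_ring TYPE('a) \<longleftrightarrow> sps_symmetric \<sigma>)"
proof -
  note e = assms(1) and arm = assms(4)
  note l1 = L1[OF e arm] and l1p = L1pow[OF e arm] and l1c = L1conv[OF e arm]
  have rev1: "right_sigma_reversible \<sigma>" if "reversible TYPE('a)"
    using that l1 unfolding reversible_def right_sigma_reversible_def by blast
  have rev2: "left_sigma_reversible \<sigma>" if "reversible TYPE('a)"
    using that l1 unfolding reversible_def left_sigma_reversible_def by blast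
  have rev3: "reversible TYPE('a)" if "right_sigma_reversible \<sigma>"
    using that l1c unfolding reversible_def right_sigma_reversible_def by blast
  have rev4: "reversible TYPE('a)" if "sps_reversible \<sigma>"
    unfolding reversible_def
  proof (intro allI impI)
    fix a b :: 'a assume "a * b = 0"
    hence "sps_mult \<sigma> (cst a) (cst b) = sps_zero" by (simp add: cst_mult cst_zero)
    with that have "sps_mult \<sigma> (cst b) (cst a) = sps_zero" unfolding sps_reversible_def by blast
    thus "b * a = 0" by (simp add: cst_mult cst_zero)
  qed
  have rev5: "sps_reversible \<sigma>" if r: "reversible TYPE('a)"
    unfolding sps_reversible_def
  proof (intro allI impI)
    fix p q :: "nat \<Rightarrow> 'a" assume "sps_mult \<sigma> p q = sps_zero"
    with arm have pq: "p i * q j = 0" for i j unfolding sps_armendariz_def by blast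
    have "q j * (\<sigma> ^^ k) (p i) = 0" for i j k
      using r pq l1p unfolding reversible_def by blast
    thus "sps_mult \<sigma> q p = sps_zero" by (simp add: sps_mult_def sps_zero_def)
  qed
  have sym_rev: "reversible TYPE('a)" if "symmetric_ring TYPE('a)"
    using that unfolding reversible_def symmetric_ring_def by (metis mult_1_left)
  have rot: "b * c * a = 0" if "symmetric_ring TYPE('a)" "a * b * c = 0" for a b c :: 'a
    using sym_rev[OF that(1)] that(2) unfolding reversible_def by (metis mult.assoc)
  have swp: "a * c * b = 0" if "symmetric_ring TYPE('a)" "a * b * c = 0" for a b c :: 'a
    using that unfolding symmetric_ring_def by blast
  have sym1: "right_sigma_symmetric \<sigma>" if "symmetric_ring TYPE('a)"
    using swp[OF that] l1 unfolding right_sigma_symmetric_def by blast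
  have sym2: "left_sigma_symmetric \<sigma>" if s: "symmetric_ring TYPE('a)"
    unfolding left_sigma_symmetric_def
  proof (intro allI impI)
    fix a b c :: 'a assume "a * b * c = 0"
    hence "b * a * c = 0" using rot[OF s] swp[OF s] by blast
    hence "a * c * b = 0" using rot[OF s] by blast
    hence "a * c * \<sigma> b = 0" using l1 by blast
    thus "\<sigma> b * a * c = 0" using sym_rev[OF s] unfolding reversible_def by (metis mult.assoc)
  qed
  have sym3: "symmetric_ring TYPE('a)" if "right_sigma_symmetric \<sigma>"
    using that l1c unfolding symmetric_ring_def right_sigma_symmetric_def by blast
  have sym4: "symmetric_ring TYPE('a)" if s: "sps_symmetric \<sigma>"
    unfolding symmetric_ring_def
  proof (intro allI impI)
    fix a b c :: 'a assume "a * b * c = 0"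
    hence "sps_mult \<sigma> (sps_mult \<sigma> (cst a) (cst b)) (cst c) = sps_zero" by (simp add: cst_mult cst_zero)
    with s have "sps_mult \<sigma> (sps_mult \<sigma> (cst a) (cst c)) (cst b) = sps_zero"
      unfolding sps_symmetric_def by blast
    thus "a * c * b = 0" by (simp add: cst_mult cst_zero)
  qed
  have sym5: "sps_symmetric \<sigma>" if s: "symmetric_ring TYPE('a)"
    unfolding sps_symmetric_def
  proof (intro allI impI)
    fix p q r :: "nat \<Rightarrow> 'a"
    assume h: "sps_mult \<sigma> (sps_mult \<sigma> p q) r = sps_zero"
    have rv: "\<And>x y::'a. x * y = 0 \<Longrightarrow> y * x = 0" using sym_rev[OF s] unfolding reversible_def by blast
    have rpq: "r j * p i * q k = 0" for i j k
    proof -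
      from h arm have "sps_mult \<sigma> p q n * r j = 0" for n unfolding sps_armendariz_def by blast
      hence "r j * sps_mult \<sigma> p q n = 0" for n using rv by blast
      hence "sps_mult \<sigma> (\<lambda>i. r j * p i) q n = 0" for n
        by (simp add: sps_mult_def sum_distrib_left mult.assoc)
      hence "sps_mult \<sigma> (\<lambda>i. r j * p i) q = sps_zero" by (auto simp: sps_zero_def)
      with arm show ?thesis unfolding sps_armendariz_def by blast
    qed
    have key: "p l * (\<sigma> ^^ m) (r j) * (\<sigma> ^^ k) (q i) = 0" for l m j k i
    proof -
      have "p l * q i * r j = 0" using rot[OF s rpq] .
      hence "p l * r j * q i = 0" using swp[OF s] by blast
      hence "p l * r j * (\<sigma> ^^ k) (q i) = 0" using l1p by blast
      hence "p l * (\<sigma> ^^ k) (q i) * r j = 0" using swp[OF s] by blast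
      hence "p l * (\<sigma> ^^ k) (q i) * (\<sigma> ^^ m) (r j) = 0" using l1p by blast
      thus ?thesis using swp[OF s] by blast
    qed
    show "sps_mult \<sigma> (sps_mult \<sigma> p r) q = sps_zero"
      by (simp add: sps_mult_def sps_zero_def sum_distrib_right key)
  qed
  show ?thesis
    unfolding sigma_reversible_def sigma_symmetric_def
    using rev1 rev2 rev3 rev4 rev5 sym1 sym2 sym3 sym4 sym5 by blast
qed

end
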